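(* Let $(a,b)$ be an open interval with $0\in(a,b)$, let $n\ge 2$ be an integer and $C\ge 0$ a constant, and let $f\in C^\infty(a,b)$ (real or complex valued) satisfy $$|f^{(n)}(x)|\le C\sum_{k=0}^{n-1}\frac{|f^{(k)}(x)|}{|x|^{n-k}},\qquad x\in(a,b)\setminus\{0\}.$$ If $f\not\equiv 0$ on $(a,b)$, then $f$ has finite vanishing order $N$ at $0$, i.e. there is an integer $N\ge 0$ with $f^{(j)}(0)=0$ for all $0\le j<N$ and $f^{(N)}(0)\neq 0$ (so $f(x)=a_Nx^N+O(x^{N+1})$ near $0$ with $a_N\neq 0$), and moreover $$N\le B_nC+n-1,\qquad B_n=\sum_{k=0}^{n-1}\frac{1}{k!}.$$ *)

theory Defs
  imports "HOL-Analysis.Analysis"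
begin

fun nth_deriv :: "nat \<Rightarrow> (real \<Rightarrow> 'a::real_normed_vector) \<Rightarrow> real \<Rightarrow> 'a" where
  "nth_deriv 0 f = f"
| "nth_deriv (Suc k) f = (\<lambda>x. vector_derivative (nth_deriv k f) (at x))"

definition smooth_on :: "real set \<Rightarrow> (real \<Rightarrow> 'a::real_normed_vector) \<Rightarrow> bool" where
  "smooth_on S f \<longleftrightarrow> (\<forall>k. \<forall>x\<in>S. nth_deriv k f differentiable (at x))"

end

theory Submission
  imports Defs
begin

lemma hasd:
  assumes "smooth_on S f" "s \<in> S"
  shows "(nth_deriv k f has_vector_derivative nth_deriv (Suc k) f s) (at s)"
  using assms unfolding smooth_on_def by (simp add: vector_derivative_works[symmetric])

lemma contD:
  assumes "smooth_on S f"
  shows "continuous_on S (nth_deriv k f)"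
  using assms unfolding smooth_on_def
  by (meson continuous_at_imp_continuous_on differentiable_imp_continuous_within)

lemma seg_in:
  fixes a b x u :: real
  assumes "a < 0" "0 < b" "x \<in> {a<..<b}" "u \<in> {0..1}"
  shows "u * x \<in> {a<..<b}"
proof (cases "x \<ge> 0")
  case True
  then have "u*x \<le> x" "0 \<le> u*x" using assms by (auto simp: mult_left_le_one_le)
  then show ?thesis using assms by auto
next
  case False
  then have "x \<le> u*x" "u*x \<le> 0" using assms
    by (auto simp: mult_nonneg_nonpos mult_left_le_one_le)
  then show ?thesis using assms by auto
qed

lemma descent1:
  fixes f :: "real \<Rightarrow> 'a::real_normed_vector"
  assumes sm: "smooth_on S f" and seg: "\<And>u. u \<in> {0..1} \<Longrightarrow> u*x \<in> S"
    and z: "nth_deriv k f 0 = 0"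
    and bd: "\<And>u. u \<in> {0<..<1} \<Longrightarrow> norm (nth_deriv (Suc k) f (u*x)) \<le> A * (u*\<bar>x\<bar>)^p"
  shows "norm (nth_deriv k f x) \<le> A / Suc p * \<bar>x\<bar>^(Suc p)"
proof -
  define F where "F = (\<lambda>u. nth_deriv k f (u*x))"
  define Phi where "Phi = (\<lambda>u::real. A / Suc p * \<bar>x\<bar>^Suc p * u^Suc p)"
  have "norm (F 1 - F 0) \<le> Phi 1 - Phi 0"
  proof (rule differentiable_bound_general[where f' = "\<lambda>u. x *\<^sub>R nth_deriv (Suc k) f (u*x)" and \<phi>' = "\<lambda>u. A*\<bar>x\<bar>^Suc p * u^p"])
    show "(0::real) < 1" by simp
    have "continuous_on {0..1} (nth_deriv k f \<circ> (\<lambda>u. u*x))"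
      apply (rule continuous_on_compose)
       apply (intro continuous_intros)
      using contD[OF sm] seg by (meson continuous_on_subset image_subsetI)
    then show "continuous_on {0..1} F" unfolding F_def by (simp add: o_def)
    show "continuous_on {0..1} Phi" unfolding Phi_def by (intro continuous_intros)
  next
    fix u :: real assume u: "0 < u" "u < 1"
    then have ux: "u*x \<in> S" using seg by auto
    have "((\<lambda>u. u*x) has_vector_derivative x) (at u)"
      using has_real_derivative_iff_has_vector_derivative[THEN iffD1, OF DERIV_cmult_right[OF DERIV_ident, of x]]
      by simp
    from vector_diff_chain_at[OF this hasd[OF sm ux, of k]]
    show "(F has_vector_derivative x *\<^sub>R nth_deriv (Suc k) f (u*x)) (at u)"
      unfolding F_def by (simp add: o_def)
    have "(Phi has_field_derivative A*\<bar>x\<bar>^Suc p * u^p) (at u)"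
      unfolding Phi_def
      by (rule derivative_eq_intros refl | simp)+
    then show "(Phi has_vector_derivative A*\<bar>x\<bar>^Suc p * u^p) (at u)"
      using has_real_derivative_iff_has_vector_derivative by blast
    have "norm (x *\<^sub>R nth_deriv (Suc k) f (u*x)) = \<bar>x\<bar> * norm (nth_deriv (Suc k) f (u*x))"
      by simp
    also have "\<dots> \<le> \<bar>x\<bar> * (A * (u*\<bar>x\<bar>)^p)"
      using bd[of u] u by (intro mult_left_mono) auto
    also have "\<dots> = A*\<bar>x\<bar>^Suc p * u^p" by (simp add: power_mult_distrib)
    finally show "norm (x *\<^sub>R nth_deriv (Suc k) f (u*x)) \<le> A*\<bar>x\<bar>^Suc p * u^p" .
  qed
  then show ?thesis using z unfolding F_def Phi_def by simp
qed

lemma descent: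
  fixes f :: "real \<Rightarrow> 'a::real_normed_vector"
  assumes sm: "smooth_on S f" and seg: "\<And>u. u \<in> {0..1} \<Longrightarrow> u*x \<in> S"
    and z: "\<And>j. j < m \<Longrightarrow> nth_deriv (k+j) f 0 = 0"
    and bd: "\<And>w. w \<in> {0<.. 1} \<Longrightarrow> norm (nth_deriv (k+m) f (w*x)) \<le> A * (w*\<bar>x\<bar>)^p"
    and w: "w \<in> {0<.. 1}"
  shows "norm (nth_deriv k f (w*x)) \<le> A * fact p / fact (p+m) * (w*\<bar>x\<bar>)^(p+m)"
  using z bd w
proof (induction m arbitrary: k w)
  case 0
  then show ?case by simp
next
  case (Suc m)
  have IH: "norm (nth_deriv (Suc k) f (w*x)) \<le> A * fact p / fact (p+m) * (w*\<bar>x\<bar>)^(p+m)"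
    if "w \<in> {0<.. 1}" for w
    apply (rule Suc.IH)
    subgoal for j using Suc.prems(1)[of "Suc j"] by simp
    subgoal for w using Suc.prems(2)[of w] by simp
    using that by auto
  have "norm (nth_deriv k f (w*x)) \<le> (A * fact p / fact (p+m)) / Suc (p+m) * \<bar>w*x\<bar>^(Suc (p+m))"
  proof (rule descent1[OF sm])
    fix u :: real assume "u \<in> {0..1}"
    then show "u * (w*x) \<in> S" using seg[of "u*w"] Suc.prems(3)
      by (auto simp: mult.assoc mult_le_one)
  next
    show "nth_deriv k f 0 = 0" using Suc.prems(1)[of 0] by simp
  next
    fix u :: real assume u: "u \<in> {0<..<1}"
    have "norm (nth_deriv (Suc k) f ((u*w)*x)) \<le> A * fact p / fact (p+m) * ((u*w)*\<bar>x\<bar>)^(p+m)"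
      using u Suc.prems(3) by (intro IH) (auto simp: mult_le_one)
    then show "norm (nth_deriv (Suc k) f (u*(w*x))) \<le> A * fact p / fact (p+m) * (u*\<bar>w*x\<bar>)^(p+m)"
      using Suc.prems(3) by (simp add: mult.assoc abs_mult)
  qed
  also have "\<dots> = A * fact p / fact (p + Suc m) * (w*\<bar>x\<bar>)^(p + Suc m)"
    using Suc.prems(3) by (simp add: abs_mult)
  finally show ?case .
qed

lemma aux_div: "0<D \<Longrightarrow> 0<F2 \<Longrightarrow> 0<F3 \<Longrightarrow> D*F1*F2 \<le> F3 \<Longrightarrow> F1/F3 \<le> 1/F2/(D::real)"
  by (simp add: divide_le_eq le_divide_eq mult.commute mult.left_commute)

lemma coef:
  fixes M n :: nat
  assumes "n \<le> M"
  shows "(\<Sum>k<n. fact (M-n) / fact (M-k) :: real) \<le> (\<Sum>k<n. 1 / fact k) / (M - n + 1)"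
proof -
  have "fact (M-n) / fact (M-k) \<le> 1 / fact (n - Suc k) / (M - n + 1 :: real)" if k: "k < n" for k
  proof -
    have "fact (Suc (M-n)) * fact (n - Suc k) dvd (fact (Suc (M-n) + (n - Suc k)) :: nat)"
      by (rule fact_fact_dvd_fact)
    moreover have "Suc (M-n) + (n - Suc k) = M - k" using k assms by auto
    ultimately have "fact (Suc (M-n)) * fact (n - Suc k) \<le> (fact (M - k) :: nat)"
      by (metis dvd_imp_le fact_gt_zero)
    then have "real (fact (Suc (M-n)) * fact (n - Suc k)) \<le> real (fact (M - k))"
      by linarith
    moreover have "real (fact (Suc (M-n)) * fact (n - Suc k)) = real (Suc (M-n)) * fact (M-n) * fact (n - Suc k)"
      by (metis fact_Suc of_nat_fact of_nat_mult)
    moreover have "real (Suc (M-n)) = real M - real n + 1" using assms by (simp add: of_nat_diff)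
    ultimately have ineq: "(real M - real n + 1) * fact (M-n) * fact (n - Suc k) \<le> (fact (M - k) :: real)"
      by (simp add: add.commute)
    have Dpos: "0 < real M - real n + 1" using assms by simp
    have p1: "0 < (fact (n - Suc k) :: real)" "0 < (fact (M - k) :: real)" by auto
    show ?thesis using aux_div[OF Dpos p1 ineq] assms by (simp add: of_nat_diff add.commute)
  qed
  then have "(\<Sum>k<n. fact (M-n) / fact (M-k) :: real) \<le> (\<Sum>k<n. 1 / fact (n - Suc k) / (M - n + 1 :: real))"
    by (intro sum_mono) auto
  also have "\<dots> = (\<Sum>k<n. 1 / fact (n - Suc k)) / (M - n + 1 :: real)"
    by (simp add: sum_divide_distrib)
  also have "(\<Sum>k<n. 1 / fact (n - Suc k) :: real) = (\<Sum>k<n. 1 / fact k)"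
    by (rule sum.nat_diff_reindex)
  finally show ?thesis .
qed

lemma vanish:
  fixes f :: "real \<Rightarrow> 'a::real_normed_vector"
  assumes ab: "a < 0" "0 < b" and n2: "n \<ge> 2" and C: "C \<ge> 0"
    and sm: "smooth_on {a<..<b} f"
    and ineq: "\<And>x. x \<in> {a<..<b} \<Longrightarrow> x \<noteq> 0 \<Longrightarrow>
           norm (nth_deriv n f x) \<le> C * (\<Sum>k<n. norm (nth_deriv k f x) / \<bar>x\<bar> ^ (n - k))"
    and Mn: "n \<le> M" and z: "\<And>j. j < M \<Longrightarrow> nth_deriv j f 0 = 0"
    and big: "(\<Sum>k<n. 1 / fact k) * C + real n - 1 < real M"
    and x: "x \<in> {a<..<b}"
  shows "f x = 0"
proof (cases "x = 0")
  case True
  then show ?thesis using z[of 0] Mn n2 by simp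
next
  case xnz: False
  define Bn where "Bn = (\<Sum>k<n. 1 / fact k :: real)"
  define th where "th = C * Bn / (real (M-n) + 1)"
  have Bn0: "0 \<le> Bn" unfolding Bn_def by (intro sum_nonneg) auto
  have th0: "0 \<le> th" unfolding th_def using Bn0 C by simp
  have "Bn * C < real (M-n) + 1" using big Mn unfolding Bn_def by (simp add: of_nat_diff)
  then have th1: "th < 1" unfolding th_def by (simp add: divide_less_eq mult.commute)
  have seg: "\<And>u. u \<in> {0..1} \<Longrightarrow> u*x \<in> {a<..<b}" by (rule seg_in[OF ab x])
  define P where "P H \<longleftrightarrow> 0 \<le> H \<and> (\<forall>w\<in>{0<.. 1}. norm (nth_deriv n f (w*x)) \<le> H * (w*\<bar>x\<bar>)^(M-n))" for H
  have "continuous_on {0..1} (nth_deriv M f \<circ> (\<lambda>u. u*x))"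
    apply (rule continuous_on_compose)
     apply (intro continuous_intros)
    using contD[OF sm] seg by (meson continuous_on_subset image_subsetI)
  then have "compact ((nth_deriv M f \<circ> (\<lambda>u. u*x)) ` {0..1})"
    by (intro compact_continuous_image) auto
  then have "bounded ((nth_deriv M f \<circ> (\<lambda>u. u*x)) ` {0..1})" by (rule compact_imp_bounded)
  then obtain K where K0: "\<forall>y\<in>(nth_deriv M f \<circ> (\<lambda>u. u*x)) ` {0..1}. norm y \<le> K"
    unfolding bounded_iff by blast
  have K: "norm (nth_deriv M f (u*x)) \<le> K" if "u \<in> {0..1}" for u
    using K0 that by auto
  have P0: "P (max K 0 / fact (M-n))"
    unfolding P_def
  proof (intro conjI ballI)
    show "0 \<le> max K 0 / fact (M-n)" by simp
    fix w :: real assume w: "w \<in> {0<.. 1}"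
    have "norm (nth_deriv n f (w*x)) \<le> max K 0 * fact 0 / fact (0 + (M-n)) * (w*\<bar>x\<bar>)^(0 + (M-n))"
    proof (rule descent[OF sm seg])
      show "nth_deriv (n+j) f 0 = 0" if "j < M - n" for j using z that by simp
      show "norm (nth_deriv (n + (M-n)) f (vv*x)) \<le> max K 0 * (vv*\<bar>x\<bar>)^0" if "vv \<in> {0<.. 1}" for vv
        using K[of vv] that Mn by auto
    qed (use w in auto)
    then show "norm (nth_deriv n f (w*x)) \<le> max K 0 / fact (M-n) * (w*\<bar>x\<bar>)^(M-n)" by simp
  qed
  have step: "P (th * H)" if PH: "P H" for H
  proof -
    have H0: "0 \<le> H" and hb: "\<And>w. w \<in> {0<.. 1} \<Longrightarrow> norm (nth_deriv n f (w*x)) \<le> H * (w*\<bar>x\<bar>)^(M-n)"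
      using PH unfolding P_def by auto
    show ?thesis unfolding P_def
    proof (intro conjI ballI)
      show "0 \<le> th * H" using th0 H0 by simp
      fix w :: real assume w: "w \<in> {0<.. 1}"
      define y where "y = w * x"
      have yI: "y \<in> {a<..<b}" unfolding y_def using seg w by auto
      have ynz: "y \<noteq> 0" unfolding y_def using w xnz by auto
      have ay: "\<bar>y\<bar> = w * \<bar>x\<bar>" unfolding y_def using w by (simp add: abs_mult)
      have bk: "norm (nth_deriv k f y) \<le> H * (fact (M-n) / fact (M-k)) * \<bar>y\<bar>^(M-k)" if k: "k < n" for k
      proof -
        have "norm (nth_deriv k f (w*x)) \<le> H * fact (M-n) / fact ((M-n) + (n-k)) * (w*\<bar>x\<bar>)^((M-n) + (n-k))"
        proof (rule descent[OF sm seg])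
          show "nth_deriv (k+j) f 0 = 0" if "j < n - k" for j using z that Mn by simp
          show "norm (nth_deriv (k + (n-k)) f (vv*x)) \<le> H * (vv*\<bar>x\<bar>)^(M-n)" if "vv \<in> {0<.. 1}" for vv
            using hb[of vv] that k by simp
        qed (use w in auto)
        moreover have "(M-n) + (n-k) = M - k" using k Mn by simp
        ultimately show ?thesis unfolding y_def[symmetric] ay[symmetric] by simp
      qed
      have "norm (nth_deriv n f y) \<le> C * (\<Sum>k<n. norm (nth_deriv k f y) / \<bar>y\<bar> ^ (n - k))"
        by (rule ineq[OF yI ynz])
      also have "\<dots> \<le> C * (\<Sum>k<n. H * (fact (M-n) / fact (M-k)) * \<bar>y\<bar>^(M-n))"
      proof (intro mult_left_mono[OF _ C] sum_mono)
        fix k assume "k \<in> {..<n}"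
        then have k: "k < n" by simp
        have e: "\<bar>y\<bar>^(M-k) = \<bar>y\<bar>^(M-n) * \<bar>y\<bar>^(n-k)"
          using k Mn by (simp add: power_add[symmetric])
        have "norm (nth_deriv k f y) / \<bar>y\<bar> ^ (n - k) \<le> H * (fact (M-n) / fact (M-k)) * \<bar>y\<bar>^(M-k) / \<bar>y\<bar> ^ (n - k)"
          using bk[OF k] by (intro divide_right_mono) auto
        also have "\<dots> = H * (fact (M-n) / fact (M-k)) * \<bar>y\<bar>^(M-n)"
          unfolding e using ynz by simp
        finally show "norm (nth_deriv k f y) / \<bar>y\<bar> ^ (n - k) \<le> H * (fact (M-n) / fact (M-k)) * \<bar>y\<bar>^(M-n)" .
      qed
      also have "\<dots> = C * H * \<bar>y\<bar>^(M-n) * (\<Sum>k<n. fact (M-n) / fact (M-k))"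
        by (simp add: sum_distrib_left sum_distrib_right mult_ac)
      also have "\<dots> \<le> C * H * \<bar>y\<bar>^(M-n) * (Bn / (real (M - n) + 1))"
        using coef[OF Mn] C H0 unfolding Bn_def by (intro mult_left_mono) (auto simp: add.commute)
      also have "\<dots> = th * H * (w*\<bar>x\<bar>)^(M-n)"
        unfolding th_def ay by simp
      finally show "norm (nth_deriv n f (w*x)) \<le> th * H * (w*\<bar>x\<bar>)^(M-n)"
        unfolding y_def .
    qed
  qed
  define H0 where "H0 = max K 0 / fact (M-n)"
  have Pi: "P (th^i * H0)" for i
  proof (induction i)
    case 0 then show ?case using P0 unfolding H0_def by simp
  next
    case (Suc i)
    from step[OF this] show ?case by (simp add: mult.assoc)
  qed
  have Dn0: "norm (nth_deriv n f (w*x)) \<le> 0 * (w*\<bar>x\<bar>)^(M-n)" if w: "w \<in> {0<.. 1}" for w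
  proof -
    have le: "norm (nth_deriv n f (w*x)) \<le> th^i * (H0 * (w*\<bar>x\<bar>)^(M-n))" for i
      using Pi[of i] w unfolding P_def by (simp add: mult.assoc)
    have "(\<lambda>i. th^i * (H0 * (w*\<bar>x\<bar>)^(M-n))) \<longlonglongrightarrow> 0 * (H0 * (w*\<bar>x\<bar>)^(M-n))"
      by (intro tendsto_mult_right LIMSEQ_power_zero) (use th0 th1 in auto)
    then have "norm (nth_deriv n f (w*x)) \<le> 0"
      using le by (intro LIMSEQ_le_const[where X="\<lambda>i. th^i * (H0 * (w*\<bar>x\<bar>)^(M-n))"]) auto
    then show ?thesis by simp
  qed
  have "norm (nth_deriv 0 f (1*x)) \<le> 0 * fact (M-n) / fact ((M-n) + n) * (1*\<bar>x\<bar>)^((M-n) + n)"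
  proof (rule descent[OF sm seg])
    show "nth_deriv (0+j) f 0 = 0" if "j < n" for j using z that Mn by simp
    show "norm (nth_deriv (0 + n) f (vv*x)) \<le> 0 * (vv*\<bar>x\<bar>)^(M-n)" if "vv \<in> {0<.. 1}" for vv
      using Dn0[OF that] by simp
  qed auto
  then show ?thesis by simp
qed

theorem lemma8:
  fixes f :: "real \<Rightarrow> complex" and a b C :: real and n :: nat
  assumes "a < 0" and "0 < b"
    and "n \<ge> 2" and "C \<ge> 0"
    and "smooth_on {a<..<b} f"
    and "\<And>x. x \<in> {a<..<b} \<Longrightarrow> x \<noteq> 0 \<Longrightarrow>
           norm (nth_deriv n f x) \<le> C * (\<Sum>k<n. norm (nth_deriv k f x) / \<bar>x\<bar> ^ (n - k))"
    and "\<exists>x\<in>{a<..<b}. f x \<noteq> 0"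
  shows "\<exists>N::nat. (\<forall>j<N. nth_deriv j f 0 = 0) \<and> nth_deriv N f 0 \<noteq> 0
           \<and> real N \<le> (\<Sum>k<n. 1 / fact k) * C + real n - 1"
proof -
  define Bn where "Bn = (\<Sum>k<n. 1 / fact k :: real)"
  have Bn0: "0 \<le> Bn" unfolding Bn_def by (intro sum_nonneg) auto
  then have BC: "0 \<le> Bn * C" using assms(4) by simp
  obtain x0 where x0: "x0 \<in> {a<..<b}" "f x0 \<noteq> 0" using assms(7) by blast
  define M0 where "M0 = n + nat \<lceil>Bn * C\<rceil>"
  have ex: "\<exists>j. nth_deriv j f 0 \<noteq> 0"
  proof (rule ccontr)
    assume "\<not> (\<exists>j. nth_deriv j f 0 \<noteq> 0)"
    then have z: "\<And>j. j < M0 \<Longrightarrow> nth_deriv j f 0 = 0" by simp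
    have "real M0 \<ge> real n + Bn * C" unfolding M0_def using BC
      by (simp add: of_nat_nat)
    then have big: "(\<Sum>k<n. 1 / fact k) * C + real n - 1 < real M0" unfolding Bn_def by simp
    have nM: "n \<le> M0" unfolding M0_def by simp
    have "f x0 = 0"
      by (rule vanish[OF assms(1-6) nM z big x0(1)])
    then show False using x0 by simp
  qed
  define N where "N = (LEAST j. nth_deriv j f 0 \<noteq> 0)"
  have N1: "nth_deriv N f 0 \<noteq> 0" unfolding N_def using LeastI_ex[OF ex] .
  have N2: "\<forall>j<N. nth_deriv j f 0 = 0" unfolding N_def using not_less_Least by blast
  have N3: "real N \<le> (\<Sum>k<n. 1 / fact k) * C + real n - 1"
  proof (rule ccontr)
    assume nb: "\<not> ?thesis"
    then have big: "(\<Sum>k<n. 1 / fact k) * C + real n - 1 < real N" by simp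
    have "n \<le> N" using big BC unfolding Bn_def by linarith
    have "f x0 = 0"
      by (rule vanish[OF assms(1-6) \<open>n \<le> N\<close> _ big x0(1)]) (use N2 in auto)
    then show False using x0 by simp
  qed
  show ?thesis using N1 N2 N3 by blast
qed

end
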